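(* Let $R=k[x_1,\dots,x_n]$, $f_1,\dots,f_m\in R$, $I=\langle f_1,\dots,f_m\rangle$, with fixed term orders on $R$ and $R^m$. Let $G$ be a finite set of polynomials in $I$ with $\{f_1^{[\mathbf e_1]},\dots,f_m^{[\mathbf e_m]}\}\subset G$. If for every critical pair of elements of $G$ its S-polynomial has a standard representation w.r.t. $G$, then $G$ is a labeled Gröbner basis for $I$.
   Context: Let $\mathbf f=(f_1,\dots,f_m)$; a polynomial in $I$ is a pair $f^{[\mathbf u]}$ with $\mathbf u\in R^m$ and $f=\mathbf u\cdot\mathbf f$, with operations $f^{[\mathbf u]}+g^{[\mathbf v]}=(f+g)^{[\mathbf u+\mathbf v]}$, $ct(f^{[\mathbf u]})=(ctf)^{[ct\mathbf u]}$. $\mathbf e_i$ is the $i$-th unit vector. $\mathrm{lpp},\mathrm{lc}$ are leading power product and coefficient (both orders denoted $\prec$), with $\mathrm{lpp}(0)=0\prec$ all nonzero power products. A module monomial $x^\alpha\mathbf e_i$ divides $x^\beta\mathbf e_j$ iff $i=j$ and $x^\alpha\mid x^\beta$. Critical pair: for $g^{[\mathbf v]},h^{[\mathbf w]}$ with $g,h\ne0$, $t=\mathrm{lcm}(\mathrm{lpp}(g),\mathrm{lpp}(h))$, $t_g=t/\mathrm{lpp}(g)$, $t_h=t/\mathrm{lpp}(h)$; if $\mathrm{lpp}(t_g\mathbf v)\succeq\mathrm{lpp}(t_h\mathbf w)$ then $(t_g,g^{[\mathbf v]},t_h,h^{[\mathbf w]})$ is a critical pair, with S-polynomial $t_g(g^{[\mathbf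 v]})-c\,t_h(h^{[\mathbf w]})$, $c=\mathrm{lc}(g)/\mathrm{lc}(h)$. A polynomial $f^{[\mathbf u]}$ in $I$ has a standard representation w.r.t. $B$ if there are $p_i\in R$ and $g_i^{[\mathbf v_i]}\in B$ with $f=\sum_i p_ig_i$, $\mathrm{lpp}(f)\succeq\mathrm{lpp}(p_ig_i)$ and $\mathrm{lpp}(\mathbf u)\succeq\mathrm{lpp}(p_i\mathbf v_i)$ for all $i$. $G$ is a labeled Gröbner basis for $I$ if for every $f^{[\mathbf u]}$ in $I$ with $f\ne0$ there is $g^{[\mathbf v]}\in G$ with $\mathrm{lpp}(g)\mid\mathrm{lpp}(f)$ and $\mathrm{lpp}(t\mathbf v)\preceq\mathrm{lpp}(\mathbf u)$, $t=\mathrm{lpp}(f)/\mathrm{lpp}(g)$. *)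

theory Defs
  imports "HOL-Library.Poly_Mapping"
begin

(* Elements of R^m: functions nat \<Rightarrow> polynomial, zero at indices \<ge> m (indices 0..m-1).
   Module monomials x^\<alpha> e_i: pairs (\<alpha>, i) with i < m. *)

type_synonym 'v pp = "'v \<Rightarrow>\<^sub>0 nat"
type_synonym ('v, 'k) mpoly = "'v pp \<Rightarrow>\<^sub>0 'k"
type_synonym ('v, 'k) mvec = "nat \<Rightarrow> ('v, 'k) mpoly"
type_synonym ('v, 'k) lpoly = "('v, 'k) mpoly \<times> ('v, 'k) mvec"

definition pp_term_order :: "('v pp \<Rightarrow> 'v pp \<Rightarrow> bool) \<Rightarrow> bool" where
  "pp_term_order le \<longleftrightarrow>
     (\<forall>a. le a a) \<and> (\<forall>a b c. le a b \<longrightarrow> le b c \<longrightarrow> le a c) \<and>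
     (\<forall>a b. le a b \<longrightarrow> le b a \<longrightarrow> a = b) \<and> (\<forall>a b. le a b \<or> le b a) \<and>
     (\<forall>a b c. le a b \<longrightarrow> le (c + a) (c + b)) \<and> (\<forall>a. le 0 a) \<and>
     (\<forall>S. S \<noteq> {} \<longrightarrow> (\<exists>x\<in>S. \<forall>y\<in>S. le x y))"

definition mod_term_order :: "nat \<Rightarrow> ('v pp \<times> nat \<Rightarrow> 'v pp \<times> nat \<Rightarrow> bool) \<Rightarrow> bool" where
  "mod_term_order m le \<longleftrightarrow>
     (let M = {s. snd s < m} in
     (\<forall>a\<in>M. le a a) \<and> (\<forall>a\<in>M. \<forall>b\<in>M. \<forall>c\<in>M. le a b \<longrightarrow> le b c \<longrightarrow> le a c) \<and>
     (\<forall>a\<in>M. \<forall>b\<in>M. le a b \<longrightarrow> le b a \<longrightarrow> a = b) \<and> (\<forall>a\<in>M. \<forall>b\<in>M. le a b \<or> le b a) \<and>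
     (\<forall>\<alpha> i \<beta> j \<gamma>. i < m \<longrightarrow> j < m \<longrightarrow> le (\<alpha>, i) (\<beta>, j) \<longrightarrow> le (\<gamma> + \<alpha>, i) (\<gamma> + \<beta>, j)) \<and>
     (\<forall>\<alpha> \<gamma> i. i < m \<longrightarrow> le (\<alpha>, i) (\<gamma> + \<alpha>, i)) \<and>
     (\<forall>S. S \<subseteq> M \<longrightarrow> S \<noteq> {} \<longrightarrow> (\<exists>x\<in>S. \<forall>y\<in>S. le x y)))"

(* leading power product; None plays the role of lpp(0)=0, below all power products *)
definition lpp :: "('v pp \<Rightarrow> 'v pp \<Rightarrow> bool) \<Rightarrow> ('v, 'k::zero) mpoly \<Rightarrow> 'v pp option" where
  "lpp le p = (if p = 0 then None
     else Some (THE t. t \<in> Poly_Mapping.keys p \<and> (\<forall>s\<in>Poly_Mapping.keys p. le s t)))"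

definition lc :: "('v pp \<Rightarrow> 'v pp \<Rightarrow> bool) \<Rightarrow> ('v, 'k::zero) mpoly \<Rightarrow> 'k" where
  "lc le p = (case lpp le p of None \<Rightarrow> 0 | Some t \<Rightarrow> Poly_Mapping.lookup p t)"

definition vkeys :: "nat \<Rightarrow> ('v, 'k::zero) mvec \<Rightarrow> ('v pp \<times> nat) set" where
  "vkeys m u = {(\<alpha>, i). i < m \<and> \<alpha> \<in> Poly_Mapping.keys (u i)}"

definition vlpp :: "nat \<Rightarrow> ('v pp \<times> nat \<Rightarrow> 'v pp \<times> nat \<Rightarrow> bool) \<Rightarrow> ('v, 'k::zero) mvec
     \<Rightarrow> ('v pp \<times> nat) option" where
  "vlpp m le u = (if vkeys m u = {} then None
     else Some (THE t. t \<in> vkeys m u \<and> (\<forall>s\<in>vkeys m u. le s t)))"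

definition ole :: "('a \<Rightarrow> 'a \<Rightarrow> bool) \<Rightarrow> 'a option \<Rightarrow> 'a option \<Rightarrow> bool" where
  "ole le a b = (case a of None \<Rightarrow> True
                  | Some x \<Rightarrow> (case b of None \<Rightarrow> False | Some y \<Rightarrow> le x y))"

definition ppoly :: "'v pp \<Rightarrow> ('v, 'k::{zero,one}) mpoly" where
  "ppoly t = Poly_Mapping.single t 1"

definition vmult :: "('v, 'k::comm_ring_1) mpoly \<Rightarrow> ('v, 'k) mvec \<Rightarrow> ('v, 'k) mvec" where
  "vmult p u = (\<lambda>i. p * u i)"

(* lcm of power products (pointwise max of exponents); a - b is truncated pointwise *)
definition pp_lcm :: "'v pp \<Rightarrow> 'v pp \<Rightarrow> 'v pp" where
  "pp_lcm a b = a + (b - a)"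

definition pp_dvd :: "'v pp \<Rightarrow> 'v pp \<Rightarrow> bool" where
  "pp_dvd a b \<longleftrightarrow> (\<exists>c. b = a + c)"

definition in_Rm :: "nat \<Rightarrow> ('v, 'k::zero) mvec \<Rightarrow> bool" where
  "in_Rm m u \<longleftrightarrow> (\<forall>i\<ge>m. u i = 0)"

(* f^[u] is a polynomial in I = <F 0, ..., F (m-1)>: u \<in> R^m and f = u \<cdot> F *)
definition labeled_in :: "nat \<Rightarrow> ('v, 'k::comm_ring_1) mvec \<Rightarrow> ('v, 'k) lpoly \<Rightarrow> bool" where
  "labeled_in m F fu \<longleftrightarrow> in_Rm m (snd fu) \<and> fst fu = (\<Sum>i<m. snd fu i * F i)"

definition unit_vec :: "nat \<Rightarrow> ('v, 'k::comm_ring_1) mvec" where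
  "unit_vec i = (\<lambda>j. if j = i then 1 else 0)"

definition lmult :: "('v, 'k::comm_ring_1) mpoly \<Rightarrow> ('v, 'k) lpoly \<Rightarrow> ('v, 'k) lpoly" where
  "lmult p fu = (p * fst fu, vmult p (snd fu))"

definition ldiff :: "('v, 'k::comm_ring_1) lpoly \<Rightarrow> ('v, 'k) lpoly \<Rightarrow> ('v, 'k) lpoly" where
  "ldiff fu gv = (fst fu - fst gv, (\<lambda>i. snd fu i - snd gv i))"

definition critical_pair ::
  "nat \<Rightarrow> ('v pp \<Rightarrow> 'v pp \<Rightarrow> bool) \<Rightarrow> ('v pp \<times> nat \<Rightarrow> 'v pp \<times> nat \<Rightarrow> bool)
     \<Rightarrow> 'v pp \<Rightarrow> ('v, 'k::comm_ring_1) lpoly \<Rightarrow> 'v pp \<Rightarrow> ('v, 'k) lpoly \<Rightarrow> bool" where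
  "critical_pair m le mle tg gv th hw \<longleftrightarrow>
     fst gv \<noteq> 0 \<and> fst hw \<noteq> 0 \<and>
     (let t = pp_lcm (the (lpp le (fst gv))) (the (lpp le (fst hw))) in
        tg = t - the (lpp le (fst gv)) \<and> th = t - the (lpp le (fst hw))) \<and>
     ole mle (vlpp m mle (vmult (ppoly th) (snd hw))) (vlpp m mle (vmult (ppoly tg) (snd gv)))"

definition spoly ::
  "('v pp \<Rightarrow> 'v pp \<Rightarrow> bool) \<Rightarrow> 'v pp \<Rightarrow> ('v, 'k::field) lpoly \<Rightarrow> 'v pp \<Rightarrow> ('v, 'k) lpoly
     \<Rightarrow> ('v, 'k) lpoly" where
  "spoly le tg gv th hw =
     ldiff (lmult (ppoly tg) gv)
           (lmult (Poly_Mapping.single 0 (lc le (fst gv) / lc le (fst hw)) * ppoly th) hw)"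

definition std_rep ::
  "nat \<Rightarrow> ('v pp \<Rightarrow> 'v pp \<Rightarrow> bool) \<Rightarrow> ('v pp \<times> nat \<Rightarrow> 'v pp \<times> nat \<Rightarrow> bool)
     \<Rightarrow> ('v, 'k::comm_ring_1) lpoly set \<Rightarrow> ('v, 'k) lpoly \<Rightarrow> bool" where
  "std_rep m le mle B fu \<longleftrightarrow>
     (\<exists>ps :: (('v, 'k) mpoly \<times> ('v, 'k) lpoly) list.
        (\<forall>(p, gv) \<in> set ps. gv \<in> B \<and>
            ole le (lpp le (p * fst gv)) (lpp le (fst fu)) \<and>
            ole mle (vlpp m mle (vmult p (snd gv))) (vlpp m mle (snd fu))) \<and>
        fst fu = (\<Sum>(p, gv) \<leftarrow> ps. p * fst gv))"

definition labeled_GB ::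
  "nat \<Rightarrow> ('v pp \<Rightarrow> 'v pp \<Rightarrow> bool) \<Rightarrow> ('v pp \<times> nat \<Rightarrow> 'v pp \<times> nat \<Rightarrow> bool)
     \<Rightarrow> ('v, 'k::comm_ring_1) mvec \<Rightarrow> ('v, 'k) lpoly set \<Rightarrow> bool" where
  "labeled_GB m le mle F G \<longleftrightarrow>
     (\<forall>fu. labeled_in m F fu \<longrightarrow> fst fu \<noteq> 0 \<longrightarrow>
        (\<exists>gv\<in>G. fst gv \<noteq> 0 \<and> pp_dvd (the (lpp le (fst gv))) (the (lpp le (fst fu))) \<and>
           ole mle (vlpp m mle (vmult (ppoly (the (lpp le (fst fu)) - the (lpp le (fst gv)))) (snd gv)))
                   (vlpp m mle (snd fu))))"

end

theory Submission imports Defs "HOL-Library.Multiset" begin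

lemma fin_max:
  assumes "finite S" "S \<noteq> {}" "\<forall>a\<in>S. \<forall>b\<in>S. r a b \<or> r b a"
    "\<forall>a\<in>S. \<forall>b\<in>S. \<forall>c\<in>S. r a b \<longrightarrow> r b c \<longrightarrow> r a c"
  shows "\<exists>x\<in>S. \<forall>y\<in>S. r y x"
  using assms
proof (induction S rule: finite_ne_induct)
  case (singleton x) then show ?case by blast
next
  case (insert x F)
  have tot: "\<forall>a\<in>F. \<forall>b\<in>F. r a b \<or> r b a" using insert.prems by blast
  have tr: "\<forall>a\<in>F. \<forall>b\<in>F. \<forall>c\<in>F. r a b \<longrightarrow> r b c \<longrightarrow> r a c" using insert.prems by blast
  obtain y where y: "y \<in> F" "\<forall>z\<in>F. r z y" using insert.IH[OF tot tr] by blast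
  have xx: "r x x" using insert.prems(1) by blast
  show ?case
  proof (cases "r x y")
    case True
    have "\<forall>z\<in>insert x F. r z y" using True y by blast
    then show ?thesis using y(1) by blast
  next
    case False
    then have yx: "r y x" using insert.prems(1) y(1) by blast
    have "\<forall>z\<in>F. r z x"
    proof
      fix z assume "z \<in> F"
      then show "r z x" using insert.prems(2) y yx \<open>y \<in> F\<close> by (meson insertCI)
    qed
    then show ?thesis using xx by blast
  qed
qed

lemma pp_diff_lookup: "Poly_Mapping.lookup (a - b) k = Poly_Mapping.lookup a k - Poly_Mapping.lookup b k" for a b :: "'v pp"
  by (rule lookup_minus)

lemma single_mult_lookup:
  "Poly_Mapping.lookup (Poly_Mapping.single a c * p) (a + b) = (c::'k::comm_semiring_1) * Poly_Mapping.lookup p b"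
  for a b :: "'v pp"
proof -
  have "Poly_Mapping.lookup (Poly_Mapping.single a c * p) (a + b)
     = (\<Sum>l. (c * (\<Sum>q. Poly_Mapping.lookup p q when q = b)) when a = l)"
    unfolding lookup_mult lookup_single
    by (rule Sum_any.cong) (auto simp: when_def)
  then show ?thesis by simp
qed

lemma poly_expand: "p = (\<Sum>a\<in>Poly_Mapping.keys p. Poly_Mapping.single a (Poly_Mapping.lookup p a))"
proof (rule poly_mapping_eqI)
  fix k
  show "Poly_Mapping.lookup p k = Poly_Mapping.lookup (\<Sum>a\<in>Poly_Mapping.keys p. Poly_Mapping.single a (Poly_Mapping.lookup p a)) k"
    unfolding lookup_sum lookup_single by (cases "k \<in> Poly_Mapping.keys p") (simp_all add: when_def in_keys_iff)
qed

lemma keys_single_mult_sub: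
  "Poly_Mapping.keys (Poly_Mapping.single a c * p) \<subseteq> (+) a ` Poly_Mapping.keys p"
  for p :: "('v, 'k::comm_semiring_1) mpoly"
  using keys_mult[of "Poly_Mapping.single a c" p] by (auto split: if_splits)

lemma keys_single_mult:
  "c \<noteq> 0 \<Longrightarrow> Poly_Mapping.keys (Poly_Mapping.single a c * p) = (+) a ` Poly_Mapping.keys p"
  for c :: "'k::field" and p :: "('v, 'k) mpoly"
  using keys_single_mult_sub[of a c p] by (auto simp: in_keys_iff single_mult_lookup)

lemma prod_lead:
  fixes R :: "'v pp \<Rightarrow> 'v pp \<Rightarrow> bool" and q p :: "('v,'k::field) mpoly"
  assumes Rtrans: "\<And>a b c. R a b \<Longrightarrow> R b c \<Longrightarrow> R a c"
    and Ranti: "\<And>a b. R a b \<Longrightarrow> R b a \<Longrightarrow> a = b" and Rtot: "\<And>a b. R a b \<or> R b a"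
    and Radd: "\<And>a b c. R a b \<Longrightarrow> R (c + a) (c + b)"
    and q: "q \<noteq> 0" and \<beta>: "\<beta> \<in> Poly_Mapping.keys p" "\<forall>b\<in>Poly_Mapping.keys p. R b \<beta>"
  shows "\<exists>s\<in>Poly_Mapping.keys q. s + \<beta> \<in> Poly_Mapping.keys (q * p) \<and> (\<forall>s'\<in>Poly_Mapping.keys q. R (s' + \<beta>) (s + \<beta>))"
proof -
  have ne: "Poly_Mapping.keys q \<noteq> {}" using q by simp
  obtain s where s: "s \<in> Poly_Mapping.keys q" "\<forall>s'\<in>Poly_Mapping.keys q. R (s' + \<beta>) (s + \<beta>)"
    using fin_max[OF finite_keys ne, of "\<lambda>x y. R (x + \<beta>) (y + \<beta>)"] Rtot Rtrans by blast
  have zero: "Poly_Mapping.lookup (Poly_Mapping.single a (Poly_Mapping.lookup q a) * p) (s + \<beta>) = 0"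
    if a: "a \<in> Poly_Mapping.keys q" "a \<noteq> s" for a
  proof (rule ccontr)
    assume "Poly_Mapping.lookup (Poly_Mapping.single a (Poly_Mapping.lookup q a) * p) (s + \<beta>) \<noteq> 0"
    then have "s + \<beta> \<in> (+) a ` Poly_Mapping.keys p"
      using keys_single_mult_sub[of a "Poly_Mapping.lookup q a" p] by (auto simp: in_keys_iff)
    then obtain b where b: "b \<in> Poly_Mapping.keys p" "s + \<beta> = a + b" by auto
    have "R (a + b) (a + \<beta>)" using Radd \<beta>(2) b(1) by blast
    moreover have "R (a + \<beta>) (s + \<beta>)" using s(2) a(1) by blast
    ultimately have "a + \<beta> = s + \<beta>" using Ranti b(2) by metis
    then have "a = s" by simp
    then show False using a by simp
  qed
  have "Poly_Mapping.lookup (q * p) (s + \<beta>) =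
      (\<Sum>a\<in>Poly_Mapping.keys q. Poly_Mapping.lookup (Poly_Mapping.single a (Poly_Mapping.lookup q a) * p) (s + \<beta>))"
    by (subst poly_expand[of q]) (simp add: sum_distrib_right lookup_sum)
  also have "\<dots> = Poly_Mapping.lookup (Poly_Mapping.single s (Poly_Mapping.lookup q s) * p) (s + \<beta>)"
    using zero s(1) by (subst sum.remove[OF finite_keys s(1)]) (simp add: sum.neutral)
  also have "\<dots> = Poly_Mapping.lookup q s * Poly_Mapping.lookup p \<beta>" by (rule single_mult_lookup)
  also have "\<dots> \<noteq> 0" using s(1) \<beta>(1) by (simp add: in_keys_iff)
  finally show ?thesis using s by (auto simp: in_keys_iff)
qed

lemma vkeys_finite: "finite (vkeys m u)"
proof -
  have "vkeys m u \<subseteq> (\<Union>i<m. Poly_Mapping.keys (u i) \<times> {i})" unfolding vkeys_def by auto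
  then show ?thesis by (rule finite_subset) auto
qed

definition tm :: "'k::comm_semiring_1 \<times> 'v pp \<times> ('v, 'k) lpoly \<Rightarrow> ('v, 'k) mpoly" where
  "tm e = Poly_Mapping.single (fst (snd e)) (fst e) * fst (snd (snd e))"

lemma tm_simp [simp]: "tm (c, s, gv) = Poly_Mapping.single s c * fst gv"
  by (simp add: tm_def)

lemma lookup_sum_mset:
  "Poly_Mapping.lookup (sum_mset (image_mset \<phi> M)) x = sum_mset (image_mset (\<lambda>e. Poly_Mapping.lookup (\<phi> e) x) M)"
  by (induction M) (simp_all add: lookup_add)

lemma sum_mset_nonzero:
  assumes "sum_mset (image_mset \<phi> M) \<noteq> (0::'a::comm_monoid_add)"
  shows "\<exists>x\<in>#M. \<phi> x \<noteq> 0"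
proof (rule ccontr)
  assume "\<not> ?thesis"
  then have "\<forall>x\<in>#M. \<phi> x = 0" by blast
  then have "sum_mset (image_mset \<phi> M) = 0"
    by (induction M) auto
  then show False using assms by simp
qed

lemma sum_mset_filter_split:
  "sum_mset (image_mset \<phi> M) = sum_mset (image_mset \<phi> (filter_mset P M)) + sum_mset (image_mset \<phi> (filter_mset (\<lambda>x. \<not> P x) M))"
  by (metis image_mset_union multiset_partition sum_mset.union)

lemma sum_mset_zero_on:
  assumes "\<forall>x\<in>#M. \<phi> x = (0::'a::comm_monoid_add)"
  shows "sum_mset (image_mset \<phi> M) = 0"
  using assms by (induction M) auto

lemma mset_sum_image:
  "finite A \<Longrightarrow> sum_mset (image_mset \<phi> (\<Sum>i\<in>A. M i)) = (\<Sum>i\<in>A. sum_mset (image_mset \<phi> (M i)))"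
  by (induction A rule: finite_induct) auto

lemma mset_sum_mem:
  assumes "x \<in># (\<Sum>i\<in>A. M i)"
  shows "\<exists>i\<in>A. x \<in># M i"
proof (cases "finite A")
  case True
  then show ?thesis using assms by (induction A rule: finite_induct) auto
next
  case False then show ?thesis using assms by simp
qed

lemma vkeys_unit: "i < m \<Longrightarrow> vkeys m (unit_vec i :: ('v, 'k::comm_ring_1) mvec) = {(0, i)}"
  unfolding vkeys_def unit_vec_def by auto

definition nf :: "'v pp \<Rightarrow> 'k::comm_semiring_1 \<Rightarrow> ('v, 'k) mpoly \<times> ('v, 'k) lpoly \<Rightarrow> ('k \<times> 'v pp \<times> ('v, 'k) lpoly) multiset" where
  "nf \<mu> c1 x = (case x of (q, h) \<Rightarrow> if fst h = 0 then {#} else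
      image_mset (\<lambda>r. (c1 * Poly_Mapping.lookup q r, \<mu> + r, h)) (mset_set (Poly_Mapping.keys q)))"

lemma nf_sum:
  "sum_mset (image_mset tm (nf \<mu> c1 (q, h))) = Poly_Mapping.single \<mu> c1 * (q * fst h)"
proof (cases "fst h = 0")
  case True then show ?thesis by (simp add: nf_def)
next
  case False
  have "sum_mset (image_mset tm (nf \<mu> c1 (q, h))) =
      (\<Sum>r\<in>Poly_Mapping.keys q. tm (c1 * Poly_Mapping.lookup q r, \<mu> + r, h))"
    using False unfolding nf_def sum_unfold_sum_mset by (simp add: multiset.map_comp o_def)
  also have "\<dots> = (\<Sum>r\<in>Poly_Mapping.keys q. Poly_Mapping.single \<mu> c1 * (Poly_Mapping.single r (Poly_Mapping.lookup q r) * fst h))"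
    by (rule sum.cong) (simp_all add: mult_single mult.assoc[symmetric])
  also have "\<dots> = Poly_Mapping.single \<mu> c1 * ((\<Sum>r\<in>Poly_Mapping.keys q. Poly_Mapping.single r (Poly_Mapping.lookup q r)) * fst h)"
    by (simp add: sum_distrib_left sum_distrib_right)
  also have "\<dots> = Poly_Mapping.single \<mu> c1 * (q * fst h)"
    using poly_expand[of q] by simp
  finally show ?thesis .
qed

lemma nfs_sum:
  "sum_mset (image_mset tm (sum_list (map (nf \<mu> c1) ps))) = Poly_Mapping.single \<mu> c1 * (\<Sum>(q, h) \<leftarrow> ps. q * fst h)"
proof (induction ps)
  case Nil then show ?case by simp
next
  case (Cons x ps)
  obtain q h where x: "x = (q, h)" by (cases x)
  show ?case using Cons nf_sum[of \<mu> c1 q h] by (simp add: x distrib_left)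
qed

lemma nfs_mem:
  assumes "e \<in># sum_list (map (nf \<mu> c1) ps)"
  shows "\<exists>q h r. (q, h) \<in> set ps \<and> fst h \<noteq> 0 \<and> r \<in> Poly_Mapping.keys q \<and> e = (c1 * Poly_Mapping.lookup q r, \<mu> + r, h)"
  using assms
proof (induction ps)
  case Nil then show ?case by simp
next
  case (Cons x ps)
  obtain q h where x: "x = (q, h)" by (cases x)
  show ?case
  proof (cases "e \<in># nf \<mu> c1 (q, h)")
    case True
    then have "fst h \<noteq> 0" unfolding nf_def by (auto split: if_splits)
    moreover obtain r where "r \<in> Poly_Mapping.keys q" "e = (c1 * Poly_Mapping.lookup q r, \<mu> + r, h)"
      using True \<open>fst h \<noteq> 0\<close> unfolding nf_def by auto
    moreover have "(q, h) \<in> set (x # ps)" using x by simp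
    ultimately show ?thesis by blast
  next
    case False
    then have "e \<in># sum_list (map (nf \<mu> c1) ps)" using Cons.prems x by simp
    then show ?thesis using Cons.IH by auto
  qed
qed

lemma li_vk:
  assumes "labeled_in m F gv" "fst gv \<noteq> 0"
  shows "vkeys m (snd gv) \<noteq> {}"
proof
  assume "vkeys m (snd gv) = {}"
  then have "\<forall>i<m. Poly_Mapping.keys (snd gv i) = {}" unfolding vkeys_def by blast
  then have "\<forall>i<m. snd gv i = 0" by simp
  then have "fst gv = 0" using assms(1) unfolding labeled_in_def by simp
  then show False using assms(2) by simp
qed

lemma pp_arith:
  fixes s1 a1 s2 a2 :: "'v pp"
  assumes "s1 + a1 = s2 + a2"
  shows "pp_lcm a1 a2 - a1 + a1 = pp_lcm a1 a2" "pp_lcm a1 a2 - a2 + a2 = pp_lcm a1 a2"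
    "(s1 + a1 - pp_lcm a1 a2) + (pp_lcm a1 a2 - a1) = s1"
    "(s1 + a1 - pp_lcm a1 a2) + (pp_lcm a1 a2 - a2) = s2"
    "(s1 + a1 - pp_lcm a1 a2) + pp_lcm a1 a2 = s1 + a1"
proof -
  have k: "Poly_Mapping.lookup s1 k + Poly_Mapping.lookup a1 k = Poly_Mapping.lookup s2 k + Poly_Mapping.lookup a2 k" for k
    using arg_cong[OF assms, of "\<lambda>p. Poly_Mapping.lookup p k"] by (simp add: lookup_add)
  show "pp_lcm a1 a2 - a1 + a1 = pp_lcm a1 a2"
    by (rule poly_mapping_eqI) (simp add: lookup_add lookup_minus pp_lcm_def)
  show "pp_lcm a1 a2 - a2 + a2 = pp_lcm a1 a2"
    by (rule poly_mapping_eqI) (simp add: lookup_add lookup_minus pp_lcm_def)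
  show "(s1 + a1 - pp_lcm a1 a2) + (pp_lcm a1 a2 - a1) = s1"
    apply (rule poly_mapping_eqI)
    subgoal for k using k[of k] unfolding lookup_add lookup_minus pp_lcm_def by arith
    done
  show "(s1 + a1 - pp_lcm a1 a2) + (pp_lcm a1 a2 - a2) = s2"
    apply (rule poly_mapping_eqI)
    subgoal for k using k[of k] unfolding lookup_add lookup_minus pp_lcm_def by arith
    done
  show "(s1 + a1 - pp_lcm a1 a2) + pp_lcm a1 a2 = s1 + a1"
    apply (rule poly_mapping_eqI)
    subgoal for k using k[of k] unfolding lookup_add lookup_minus pp_lcm_def by arith
    done
qed

lemma keys_minus_sub: "Poly_Mapping.keys (a - b) \<subseteq> Poly_Mapping.keys a \<union> Poly_Mapping.keys (b::('a, 'b::ab_group_add) poly_mapping)"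
  by (auto simp: in_keys_iff lookup_minus)

lemma pp_lcm_comm: "pp_lcm a b = pp_lcm b (a :: 'v pp)"
  apply (rule poly_mapping_eqI)
  subgoal for k unfolding pp_lcm_def lookup_add lookup_minus by arith
  done

locale ctx =
  fixes m :: nat and le :: "'v pp \<Rightarrow> 'v pp \<Rightarrow> bool"
    and mle :: "'v pp \<times> nat \<Rightarrow> 'v pp \<times> nat \<Rightarrow> bool"
  assumes pto: "pp_term_order le" and mto: "mod_term_order m mle"
begin

lemma PT: "(\<forall>a. le a a)" "(\<forall>a b c. le a b \<longrightarrow> le b c \<longrightarrow> le a c)"
   "(\<forall>a b. le a b \<longrightarrow> le b a \<longrightarrow> a = b)" "(\<forall>a b. le a b \<or> le b a)"
   "(\<forall>a b c. le a b \<longrightarrow> le (c + a) (c + b))" "(\<forall>a. le 0 a)"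
   "(\<forall>S. S \<noteq> {} \<longrightarrow> (\<exists>x\<in>S. \<forall>y\<in>S. le x y))"
  using pto unfolding pp_term_order_def by simp_all

lemma ple_refl: "le a a" using PT(1) by (rule spec)
lemma ple_trans: "le a b \<Longrightarrow> le b c \<Longrightarrow> le a c" using PT(2) by blast
lemma ple_antisym: "le a b \<Longrightarrow> le b a \<Longrightarrow> a = b" using PT(3) by blast
lemma ple_total: "le a b \<or> le b a" using PT(4) by blast
lemma ple_add: "le a b \<Longrightarrow> le (c + a) (c + b)" using PT(5) by blast
lemma ple_min: "S \<noteq> {} \<Longrightarrow> \<exists>x\<in>S. \<forall>y\<in>S. le x y" using PT(7) by blast

lemmas MT0 = mto[unfolded mod_term_order_def Let_def]

lemmas MT = conjunct1[OF MT0] conjunct1[OF conjunct2[OF MT0]] conjunct1[OF conjunct2[OF conjunct2[OF MT0]]]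
     conjunct1[OF conjunct2[OF conjunct2[OF conjunct2[OF MT0]]]]
     conjunct1[OF conjunct2[OF conjunct2[OF conjunct2[OF conjunct2[OF MT0]]]]]

lemma mle_refl: "snd a < m \<Longrightarrow> mle a a" using MT(1) by blast
lemma mle_trans: "snd a < m \<Longrightarrow> snd b < m \<Longrightarrow> snd c < m \<Longrightarrow> mle a b \<Longrightarrow> mle b c \<Longrightarrow> mle a c"
  using MT(2) by blast
lemma mle_antisym: "snd a < m \<Longrightarrow> snd b < m \<Longrightarrow> mle a b \<Longrightarrow> mle b a \<Longrightarrow> a = b"
  using MT(3) by blast
lemma mle_total: "snd a < m \<Longrightarrow> snd b < m \<Longrightarrow> mle a b \<or> mle b a"
  using MT(4) by blast
lemma mle_add: "i < m \<Longrightarrow> j < m \<Longrightarrow> mle (a, i) (b, j) \<Longrightarrow> mle (c + a, i) (c + b, j)"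
  using MT(5) by blast

lemma lpp_char:
  assumes "(p::('v,'k::zero) mpoly) \<noteq> 0"
  shows "\<exists>t. lpp le p = Some t \<and> t \<in> Poly_Mapping.keys p \<and> (\<forall>s\<in>Poly_Mapping.keys p. le s t)"
proof -
  have ne: "Poly_Mapping.keys p \<noteq> {}" using assms by simp
  obtain x where x: "x \<in> Poly_Mapping.keys p" "\<forall>y\<in>Poly_Mapping.keys p. le y x"
    using fin_max[OF finite_keys ne, of le] ple_total ple_trans by blast
  have "(THE t. t \<in> Poly_Mapping.keys p \<and> (\<forall>s\<in>Poly_Mapping.keys p. le s t)) = x"
    by (rule the_equality) (use x ple_antisym in blast)+
  then show ?thesis using x assms unfolding lpp_def by auto
qed

lemma lpp_eq:
  assumes "t \<in> Poly_Mapping.keys (p::('v,'k::zero) mpoly)" "\<forall>s\<in>Poly_Mapping.keys p. le s t"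
  shows "lpp le p = Some t"
proof -
  have "p \<noteq> 0" using assms(1) by auto
  then obtain t' where t': "lpp le p = Some t'" "t' \<in> Poly_Mapping.keys p" "\<forall>s\<in>Poly_Mapping.keys p. le s t'"
    using lpp_char by blast
  have "t = t'" using ple_antisym assms t' by blast
  then show ?thesis using t' by simp
qed

lemma lpp_None: "lpp le p = None \<longleftrightarrow> p = 0"
  unfolding lpp_def by simp

lemma vlpp_char:
  assumes "vkeys m (u::('v,'k::zero) mvec) \<noteq> {}"
  shows "\<exists>t. vlpp m mle u = Some t \<and> t \<in> vkeys m u \<and> (\<forall>s\<in>vkeys m u. mle s t)"
proof -
  have inM: "\<forall>a\<in>vkeys m u. snd a < m" unfolding vkeys_def by auto
  obtain x where x: "x \<in> vkeys m u" "\<forall>y\<in>vkeys m u. mle y x"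
    using fin_max[OF vkeys_finite assms, of mle] mle_total mle_trans inM by metis
  have "(THE t. t \<in> vkeys m u \<and> (\<forall>s\<in>vkeys m u. mle s t)) = x"
    by (rule the_equality) (use x mle_antisym inM in blast)+
  then show ?thesis using x assms unfolding vlpp_def by auto
qed

lemma vlpp_eq:
  assumes "t \<in> vkeys m (u::('v,'k::zero) mvec)" "\<forall>s\<in>vkeys m u. mle s t"
  shows "vlpp m mle u = Some t"
proof -
  have inM: "\<forall>a\<in>vkeys m u. snd a < m" unfolding vkeys_def by auto
  have "vkeys m u \<noteq> {}" using assms(1) by auto
  then obtain t' where t': "vlpp m mle u = Some t'" "t' \<in> vkeys m u" "\<forall>s\<in>vkeys m u. mle s t'"
    using vlpp_char by blast
  have "t = t'" using mle_antisym assms t' inM by blast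
  then show ?thesis using t' by simp
qed

lemma vlpp_None: "vlpp m mle u = None \<longleftrightarrow> vkeys m u = {}"
  unfolding vlpp_def by simp

lemma lpp_single_mult:
  fixes g :: "('v, 'k::field) mpoly"
  assumes "c \<noteq> 0" "lpp le g = Some t"
  shows "lpp le (Poly_Mapping.single s c * g) = Some (s + t)"
proof -
  have g: "g \<noteq> 0" using assms(2) unfolding lpp_def by (auto split: if_splits)
  obtain t' where t': "lpp le g = Some t'" "t' \<in> Poly_Mapping.keys g" "\<forall>s\<in>Poly_Mapping.keys g. le s t'"
    using lpp_char[OF g] by blast
  have tt: "t' = t" using t'(1) assms(2) by simp
  show ?thesis
    by (rule lpp_eq) (use t' tt ple_add in \<open>auto simp: keys_single_mult[OF assms(1)]\<close>)
qed

lemma lpp_mult: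
  fixes q h :: "('v, 'k::field) mpoly"
  assumes "q \<noteq> 0" "lpp le h = Some \<beta>"
  shows "\<exists>t. lpp le (q * h) = Some t \<and> (\<forall>r\<in>Poly_Mapping.keys q. le (r + \<beta>) t)"
proof -
  have h: "h \<noteq> 0" using assms(2) unfolding lpp_def by (auto split: if_splits)
  obtain t' where t': "lpp le h = Some t'" "t' \<in> Poly_Mapping.keys h" "\<forall>s\<in>Poly_Mapping.keys h. le s t'"
    using lpp_char[OF h] by blast
  have tt: "t' = \<beta>" using t'(1) assms(2) by simp
  have "\<exists>s\<in>Poly_Mapping.keys q. s + \<beta> \<in> Poly_Mapping.keys (q * h) \<and>
         (\<forall>s'\<in>Poly_Mapping.keys q. le (s' + \<beta>) (s + \<beta>))"
  proof (rule prod_lead[OF _ _ _ _ assms(1)])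
    show "\<And>a b c. le a b \<Longrightarrow> le b c \<Longrightarrow> le a c" by (rule ple_trans)
    show "\<And>a b. le a b \<Longrightarrow> le b a \<Longrightarrow> a = b" by (rule ple_antisym)
    show "\<And>a b. le a b \<or> le b a" by (rule ple_total)
    show "\<And>a b c. le a b \<Longrightarrow> le (c + a) (c + b)" by (rule ple_add)
    show "\<beta> \<in> Poly_Mapping.keys h" using t' tt by simp
    show "\<forall>b\<in>Poly_Mapping.keys h. le b \<beta>" using t' tt by simp
  qed
  then obtain s where s: "s \<in> Poly_Mapping.keys q" "s + \<beta> \<in> Poly_Mapping.keys (q * h)"
     "\<forall>s'\<in>Poly_Mapping.keys q. le (s' + \<beta>) (s + \<beta>)" by blast
  have "\<forall>x\<in>Poly_Mapping.keys (q * h). le x (s + \<beta>)"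
  proof
    fix x assume "x \<in> Poly_Mapping.keys (q * h)"
    then obtain a b where ab: "x = a + b" "a \<in> Poly_Mapping.keys q" "b \<in> Poly_Mapping.keys h"
      using keys_mult by blast
    have "le (a + b) (a + \<beta>)" using ple_add t'(3) tt ab(3) by blast
    then show "le x (s + \<beta>)" using s(3) ab ple_trans by blast
  qed
  then show ?thesis using lpp_eq[OF s(2)] s(3) by blast
qed

lemma vkeys_single_mult:
  fixes v :: "('v, 'k::field) mvec"
  assumes "c \<noteq> 0"
  shows "vkeys m (vmult (Poly_Mapping.single s c) v) = (\<lambda>(\<alpha>, i). (s + \<alpha>, i)) ` vkeys m v"
  unfolding vkeys_def vmult_def keys_single_mult[OF assms] by auto

lemma vlpp_single_mult:
  fixes v :: "('v, 'k::field) mvec"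
  assumes "c \<noteq> 0" "vlpp m mle v = Some (\<beta>, i)"
  shows "vlpp m mle (vmult (Poly_Mapping.single s c) v) = Some (s + \<beta>, i)"
proof -
  have ne: "vkeys m v \<noteq> {}" using assms(2) unfolding vlpp_def by (auto split: if_splits)
  obtain t' where t': "vlpp m mle v = Some t'" "t' \<in> vkeys m v" "\<forall>s\<in>vkeys m v. mle s t'"
    using vlpp_char[OF ne] by blast
  have tt: "t' = (\<beta>, i)" using t'(1) assms(2) by simp
  have im: "i < m" using t'(2) tt unfolding vkeys_def by auto
  show ?thesis
  proof (rule vlpp_eq)
    show "(s + \<beta>, i) \<in> vkeys m (vmult (Poly_Mapping.single s c) v)"
      unfolding vkeys_single_mult[OF assms(1)] using t'(2) tt by force
    show "\<forall>x\<in>vkeys m (vmult (Poly_Mapping.single s c) v). mle x (s + \<beta>, i)"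
    proof
      fix x assume "x \<in> vkeys m (vmult (Poly_Mapping.single s c) v)"
      then obtain a j where aj: "(a, j) \<in> vkeys m v" "x = (s + a, j)"
        unfolding vkeys_single_mult[OF assms(1)] by auto
      have "j < m" using aj(1) unfolding vkeys_def by auto
      then show "mle x (s + \<beta>, i)" using mle_add[OF _ im] t'(3) aj tt by blast
    qed
  qed
qed

lemma vlpp_mult:
  fixes q :: "('v, 'k::field) mpoly" and w :: "('v, 'k) mvec"
  assumes "q \<noteq> 0" "vlpp m mle w = Some (\<beta>, i)"
  shows "\<exists>t. vlpp m mle (vmult q w) = Some t \<and> (\<forall>r\<in>Poly_Mapping.keys q. mle (r + \<beta>, i) t)"
proof -
  have ne: "vkeys m w \<noteq> {}" using assms(2) unfolding vlpp_def by (auto split: if_splits)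
  obtain t' where t': "vlpp m mle w = Some t'" "t' \<in> vkeys m w" "\<forall>s\<in>vkeys m w. mle s t'"
    using vlpp_char[OF ne] by blast
  have tt: "t' = (\<beta>, i)" using t'(1) assms(2) by simp
  have im: "i < m" and bk: "\<beta> \<in> Poly_Mapping.keys (w i)" using t'(2) tt unfolding vkeys_def by auto
  have bmax: "\<forall>b\<in>Poly_Mapping.keys (w i). mle (b, i) (\<beta>, i)"
    using t'(3) tt im unfolding vkeys_def by auto
  obtain s where s: "s \<in> Poly_Mapping.keys q" "s + \<beta> \<in> Poly_Mapping.keys (q * w i)"
     "\<forall>s'\<in>Poly_Mapping.keys q. mle (s' + \<beta>, i) (s + \<beta>, i)"
  proof -
    have "\<exists>s\<in>Poly_Mapping.keys q. s + \<beta> \<in> Poly_Mapping.keys (q * w i) \<and>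
         (\<forall>s'\<in>Poly_Mapping.keys q. (\<lambda>x y. mle (x, i) (y, i)) (s' + \<beta>) (s + \<beta>))"
    proof (rule prod_lead[OF _ _ _ _ assms(1) bk])
      show "\<And>a b c. mle (a, i) (b, i) \<Longrightarrow> mle (b, i) (c, i) \<Longrightarrow> mle (a, i) (c, i)"
        using mle_trans im by (metis snd_conv)
      show "\<And>a b. mle (a, i) (b, i) \<Longrightarrow> mle (b, i) (a, i) \<Longrightarrow> a = b"
        using mle_antisym im by (metis prod.inject snd_conv)
      show "\<And>a b. mle (a, i) (b, i) \<or> mle (b, i) (a, i)"
        using mle_total im by (metis snd_conv)
      show "\<And>a b c. mle (a, i) (b, i) \<Longrightarrow> mle (c + a, i) (c + b, i)"
        using mle_add im by blast
      show "\<forall>b\<in>Poly_Mapping.keys (w i). mle (b, i) (\<beta>, i)" by (rule bmax)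
    qed
    then show ?thesis using that by blast
  qed
  have inv: "(s + \<beta>, i) \<in> vkeys m (vmult q w)" using s(2) im unfolding vkeys_def vmult_def by auto
  have "\<forall>x\<in>vkeys m (vmult q w). mle x (s + \<beta>, i)"
  proof
    fix x assume "x \<in> vkeys m (vmult q w)"
    then obtain y j where x: "x = (y, j)" "j < m" "y \<in> Poly_Mapping.keys (q * w j)"
      unfolding vkeys_def vmult_def by auto
    then obtain a b where ab: "y = a + b" "a \<in> Poly_Mapping.keys q" "b \<in> Poly_Mapping.keys (w j)"
      using keys_mult by blast
    have "(b, j) \<in> vkeys m w" using ab x unfolding vkeys_def by auto
    then have "mle (b, j) (\<beta>, i)" using t'(3) tt by auto
    then have 1: "mle (a + b, j) (a + \<beta>, i)" using mle_add x(2) im by blast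
    have 2: "mle (a + \<beta>, i) (s + \<beta>, i)" using s(3) ab(2) by blast
    show "mle x (s + \<beta>, i)" using mle_trans[OF _ _ _ 1 2] x ab im by simp
  qed
  then show ?thesis using vlpp_eq[OF inv] s(3) by blast
qed

definition LP :: "('v, 'k::zero) mpoly \<Rightarrow> 'v pp" where "LP p = the (lpp le p)"
definition VP :: "('v, 'k::zero) mvec \<Rightarrow> 'v pp \<times> nat" where "VP v = the (vlpp m mle v)"

definition bnd :: "'k::zero \<times> 'v pp \<times> ('v, 'k) lpoly \<Rightarrow> 'v pp" where
  "bnd e = (case e of (c, s, gv) \<Rightarrow> s + LP (fst gv))"

definition good0 :: "('v, 'k::field) lpoly set \<Rightarrow> 'v pp \<times> nat \<Rightarrow> 'k \<times> 'v pp \<times> ('v, 'k) lpoly \<Rightarrow> bool" where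
  "good0 G U e = (case e of (c, s, gv) \<Rightarrow> gv \<in> G \<and> c \<noteq> 0 \<and> fst gv \<noteq> 0 \<and> vkeys m (snd gv) \<noteq> {} \<and>
      mle (s + fst (VP (snd gv)), snd (VP (snd gv))) U)"

definition good :: "('v, 'k::field) lpoly set \<Rightarrow> 'v pp \<times> nat \<Rightarrow> 'v pp \<Rightarrow> 'k \<times> 'v pp \<times> ('v, 'k) lpoly \<Rightarrow> bool" where
  "good G U T e = (good0 G U e \<and> le (bnd e) T)"

definition lvl :: "'v pp \<Rightarrow> 'k::zero \<times> 'v pp \<times> ('v, 'k) lpoly \<Rightarrow> bool" where
  "lvl T e = (bnd e = T)"

definition rep :: "('v, 'k::field) lpoly set \<Rightarrow> 'v pp \<times> nat \<Rightarrow> 'v pp \<Rightarrow> ('v, 'k) mpoly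
     \<Rightarrow> ('k \<times> 'v pp \<times> ('v, 'k) lpoly) multiset \<Rightarrow> bool" where
  "rep G U T f es = (snd U < m \<and> f = sum_mset (image_mset tm es) \<and> (\<forall>e\<in>#es. good G U T e))"

lemma LP_char: "(p::('v,'k::zero) mpoly) \<noteq> 0 \<Longrightarrow> lpp le p = Some (LP p) \<and> LP p \<in> Poly_Mapping.keys p \<and> (\<forall>s\<in>Poly_Mapping.keys p. le s (LP p))"
  using lpp_char[of p] unfolding LP_def by auto

lemma VP_char: "vkeys m (u::('v,'k::zero) mvec) \<noteq> {} \<Longrightarrow> vlpp m mle u = Some (VP u) \<and> VP u \<in> vkeys m u \<and> (\<forall>s\<in>vkeys m u. mle s (VP u))"
  using vlpp_char[of u] unfolding VP_def by auto

lemma VP_m: "vkeys m (u::('v,'k::zero) mvec) \<noteq> {} \<Longrightarrow> snd (VP u) < m"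
  using VP_char[of u] unfolding vkeys_def by auto

lemma good_tm:
  assumes "good G U T (c, s, gv)"
  shows "lpp le (tm (c, s, gv)) = Some (s + LP (fst gv))"
    "Poly_Mapping.lookup (tm (c, s, gv)) (s + LP (fst gv)) \<noteq> 0"
    "\<forall>x\<in>Poly_Mapping.keys (tm (c, s, gv)). le x (s + LP (fst gv))"
proof -
  have g: "fst gv \<noteq> 0" and c: "c \<noteq> 0" using assms unfolding good_def good0_def bnd_def by auto
  have L: "lpp le (fst gv) = Some (LP (fst gv))" "LP (fst gv) \<in> Poly_Mapping.keys (fst gv)"
    using LP_char[OF g] by auto
  show 1: "lpp le (tm (c, s, gv)) = Some (s + LP (fst gv))"
    using lpp_single_mult[OF c L(1)] by simp
  show "Poly_Mapping.lookup (tm (c, s, gv)) (s + LP (fst gv)) \<noteq> 0"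
    using c L(2) by (simp add: single_mult_lookup in_keys_iff)
  have "tm (c, s, gv) \<noteq> 0" using 1 lpp_None by (metis option.distinct(1))
  then show "\<forall>x\<in>Poly_Mapping.keys (tm (c, s, gv)). le x (s + LP (fst gv))"
    using LP_char[of "tm (c, s, gv)"] 1 unfolding LP_def by auto
qed

lemma good_lookup_nonlvl:
  assumes "good G U T e" "\<not> lvl T e"
  shows "Poly_Mapping.lookup (tm e) T = 0"
proof -
  obtain c s gv where e: "e = (c, s, gv)" by (cases e) auto
  have b: "le (s + LP (fst gv)) T" "s + LP (fst gv) \<noteq> T" using assms unfolding e good_def good0_def bnd_def lvl_def by auto
  show ?thesis
  proof (rule ccontr)
    assume "Poly_Mapping.lookup (tm e) T \<noteq> 0"
    then have "T \<in> Poly_Mapping.keys (tm e)" by (simp add: in_keys_iff)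
    then have "le T (s + LP (fst gv))" using good_tm(3)[of G U T c s gv] assms(1) e by auto
    then show False using b ple_antisym by blast
  qed
qed

lemma rep_lookup_T:
  assumes "rep G U T f es"
  shows "Poly_Mapping.lookup f T = sum_mset (image_mset (\<lambda>e. Poly_Mapping.lookup (tm e) T) (filter_mset (lvl T) es))"
proof -
  have f: "f = sum_mset (image_mset tm es)" using assms unfolding rep_def by auto
  have z: "sum_mset (image_mset (\<lambda>e. Poly_Mapping.lookup (tm e) T) (filter_mset (\<lambda>x. \<not> lvl T x) es)) = 0"
  proof (rule sum_mset_zero_on, rule ballI)
    fix x assume "x \<in># filter_mset (\<lambda>x. \<not> lvl T x) es"
    then have "x \<in># es" "\<not> lvl T x" by auto
    then show "Poly_Mapping.lookup (tm x) T = 0" using good_lookup_nonlvl assms unfolding rep_def by blast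
  qed
  show ?thesis unfolding f lookup_sum_mset
    by (subst sum_mset_filter_split[of _ _ "lvl T"]) (simp add: z)
qed

lemma rep_bound:
  assumes "rep G U T f es" "f \<noteq> 0"
  shows "le (LP f) T"
proof -
  have f: "f = sum_mset (image_mset tm es)" using assms unfolding rep_def by auto
  have "Poly_Mapping.lookup f (LP f) \<noteq> 0" using LP_char[OF assms(2)] by (simp add: in_keys_iff)
  then obtain e where e: "e \<in># es" "Poly_Mapping.lookup (tm e) (LP f) \<noteq> 0"
    using sum_mset_nonzero unfolding f lookup_sum_mset by blast
  obtain c s gv where ee: "e = (c, s, gv)" by (cases e) auto
  have g: "good G U T e" using assms(1) e(1) unfolding rep_def by auto
  have "le (LP f) (s + LP (fst gv))" using good_tm(3)[of G U T c s gv] g e(2) ee by (auto simp: in_keys_iff)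
  moreover have "le (s + LP (fst gv)) T" using g ee unfolding good_def good0_def bnd_def by auto
  ultimately show ?thesis using ple_trans by blast
qed

lemma choose_T:
  assumes "snd U < m" "f \<noteq> 0" "f = sum_mset (image_mset tm es)" "\<forall>e\<in>#es. good0 G U e"
  shows "\<exists>T. rep G U T f es \<and> T \<in> bnd ` set_mset es"
proof -
  have "es \<noteq> {#}" using assms(2,3) by auto
  then have ne: "bnd ` set_mset es \<noteq> {}" by auto
  obtain T where T: "T \<in> bnd ` set_mset es" "\<forall>y\<in>bnd ` set_mset es. le y T"
    using fin_max[OF _ ne, of le] ple_total ple_trans by blast
  have "rep G U T f es" unfolding rep_def good_def using assms T(2) by auto
  then show ?thesis using T(1) by blast
qed

lemma empty_level:
  assumes "rep G U T f es" "f \<noteq> 0" "filter_mset (lvl T) es = {#}"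
  shows "\<exists>T'. le T' T \<and> T' \<noteq> T \<and> rep G U T' f es"
proof -
  have r: "snd U < m" "f = sum_mset (image_mset tm es)" "\<forall>e\<in>#es. good0 G U e \<and> le (bnd e) T"
    using assms(1) unfolding rep_def good_def by auto
  obtain T' where T': "rep G U T' f es" "T' \<in> bnd ` set_mset es"
    using choose_T[OF r(1) assms(2) r(2)] r(3) by blast
  then obtain e where e: "e \<in># es" "T' = bnd e" by auto
  have "le T' T" using e r(3) by auto
  moreover have "T' \<noteq> T"
  proof
    assume "T' = T"
    then have "e \<in># filter_mset (lvl T) es" using e unfolding lvl_def by auto
    then show False using assms(3) by simp
  qed
  ultimately show ?thesis using T'(1) by blast
qed

definition CP :: "('v, 'k::field) lpoly set \<Rightarrow> bool" where
  "CP G = (\<forall>gv\<in>G. \<forall>hw\<in>G. \<forall>tg th. critical_pair m le mle tg gv th hw \<longrightarrow>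
            std_rep m le mle G (spoly le tg gv th hw))"

definition LI :: "('v, 'k::field) mvec \<Rightarrow> ('v, 'k) lpoly set \<Rightarrow> bool" where
  "LI F G = (\<forall>gv\<in>G. labeled_in m F gv)"

lemma lpp_SomeD:
  assumes "lpp le (p::('v,'k::zero) mpoly) = Some t"
  shows "p \<noteq> 0" "t = LP p" "t \<in> Poly_Mapping.keys p" "\<forall>s\<in>Poly_Mapping.keys p. le s t"
proof -
  show p: "p \<noteq> 0" using assms unfolding lpp_def by (auto split: if_splits)
  show "t = LP p" using assms unfolding LP_def by simp
  then show "t \<in> Poly_Mapping.keys p" "\<forall>s\<in>Poly_Mapping.keys p. le s t" using LP_char[OF p] by auto
qed

lemma vlpp_SomeD:
  assumes "vlpp m mle (u::('v,'k::zero) mvec) = Some t"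
  shows "vkeys m u \<noteq> {}" "t = VP u" "t \<in> vkeys m u" "\<forall>s\<in>vkeys m u. mle s t" "snd t < m"
proof -
  show p: "vkeys m u \<noteq> {}" using assms unfolding vlpp_def by (auto split: if_splits)
  show "t = VP u" using assms unfolding VP_def by simp
  then show "t \<in> vkeys m u" "\<forall>s\<in>vkeys m u. mle s t" using VP_char[OF p] by auto
  then show "snd t < m" unfolding vkeys_def by auto
qed

lemma keys_le_smult:
  fixes g :: "('v, 'k::field) mpoly"
  assumes "c \<noteq> 0" "g \<noteq> 0" "x \<in> Poly_Mapping.keys (Poly_Mapping.single s c * g)"
  shows "le x (s + LP g)"
proof -
  obtain b where b: "b \<in> Poly_Mapping.keys g" "x = s + b" using assms(3) unfolding keys_single_mult[OF assms(1)] by auto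
  have "le b (LP g)" using LP_char[OF assms(2)] b(1) by blast
  then show ?thesis using b(2) ple_add by blast
qed

lemma vkeys_le_smult:
  fixes v :: "('v, 'k::field) mvec"
  assumes "c \<noteq> 0" "vkeys m v \<noteq> {}" "x \<in> vkeys m (vmult (Poly_Mapping.single s c) v)"
  shows "mle x (s + fst (VP v), snd (VP v))"
proof -
  have "vlpp m mle v = Some (fst (VP v), snd (VP v))" using VP_char[OF assms(2)] by simp
  then have "vlpp m mle (vmult (Poly_Mapping.single s c) v) = Some (s + fst (VP v), snd (VP v))"
    by (rule vlpp_single_mult[OF assms(1)])
  then show ?thesis using vlpp_SomeD(4) assms(3) by blast
qed

lemma pair_step:
  fixes c1 c2 :: "'k::field" and g1 g2 :: "('v, 'k) lpoly"
  assumes CP: "CP G" and LI: "LI F G"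
    and r: "rep G U T f (add_mset (c1, s1, g1) (add_mset (c2, s2, g2) rest))"
    and l1: "s1 + LP (fst g1) = T" and l2: "s2 + LP (fst g2) = T"
    and ori: "ole mle (vlpp m mle (vmult (ppoly (pp_lcm (LP (fst g1)) (LP (fst g2)) - LP (fst g2))) (snd g2)))
                      (vlpp m mle (vmult (ppoly (pp_lcm (LP (fst g1)) (LP (fst g2)) - LP (fst g1))) (snd g1)))"
  shows "\<exists>es'. rep G U T f es' \<and> size (filter_mset (lvl T) es') <
           size (filter_mset (lvl T) (add_mset (c1, s1, g1) (add_mset (c2, s2, g2) rest)))"
proof -
  define a1 where "a1 = LP (fst g1)"
  define a2 where "a2 = LP (fst g2)"
  define t where "t = pp_lcm a1 a2"
  define t1 where "t1 = t - a1"
  define t2 where "t2 = t - a2"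
  define \<mu> where "\<mu> = T - t"
  have l1': "s1 + a1 = s2 + a2" using l1 l2 unfolding a1_def a2_def by simp
  have ar: "t1 + a1 = t" "t2 + a2 = t" "\<mu> + t1 = s1" "\<mu> + t2 = s2" "\<mu> + t = T"
    using pp_arith[OF l1'] l1 unfolding t_def t1_def t2_def \<mu>_def a1_def a2_def by auto
  have Um: "snd U < m" and fsum: "f = sum_mset (image_mset tm (add_mset (c1, s1, g1) (add_mset (c2, s2, g2) rest)))"
    and grest: "\<forall>e\<in>#rest. good G U T e"
    and ge1: "good G U T (c1, s1, g1)" and ge2: "good G U T (c2, s2, g2)"
    using r unfolding rep_def by auto
  have g1: "g1 \<in> G" "c1 \<noteq> 0" "fst g1 \<noteq> 0" "vkeys m (snd g1) \<noteq> {}"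
      "mle (s1 + fst (VP (snd g1)), snd (VP (snd g1))) U"
    using ge1 unfolding good_def good0_def by auto
  have g2: "g2 \<in> G" "c2 \<noteq> 0" "fst g2 \<noteq> 0" "vkeys m (snd g2) \<noteq> {}"
      "mle (s2 + fst (VP (snd g2)), snd (VP (snd g2))) U"
    using ge2 unfolding good_def good0_def by auto
  have L1: "lpp le (fst g1) = Some a1" "a1 \<in> Poly_Mapping.keys (fst g1)" using LP_char[OF g1(3)] a1_def by auto
  have L2: "lpp le (fst g2) = Some a2" "a2 \<in> Poly_Mapping.keys (fst g2)" using LP_char[OF g2(3)] a2_def by auto
  define k where "k = lc le (fst g1) / lc le (fst g2)"
  have lc1: "lc le (fst g1) = Poly_Mapping.lookup (fst g1) a1" "Poly_Mapping.lookup (fst g1) a1 \<noteq> 0"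
    using L1 unfolding lc_def by (auto simp: in_keys_iff)
  have lc2: "lc le (fst g2) = Poly_Mapping.lookup (fst g2) a2" "Poly_Mapping.lookup (fst g2) a2 \<noteq> 0"
    using L2 unfolding lc_def by (auto simp: in_keys_iff)
  have k0: "k \<noteq> 0" unfolding k_def using lc1 lc2 by simp
  define fS where "fS = Poly_Mapping.single t1 1 * fst g1 - Poly_Mapping.single t2 k * fst g2"
  define uS where "uS = (\<lambda>i. Poly_Mapping.single t1 1 * snd g1 i - Poly_Mapping.single t2 k * snd g2 i)"
  have S: "spoly le t1 g1 t2 g2 = (fS, uS)"
    unfolding spoly_def ldiff_def lmult_def vmult_def ppoly_def fS_def uS_def k_def by (simp add: mult_single)
  have crit: "critical_pair m le mle t1 g1 t2 g2"
    unfolding critical_pair_def Let_def using g1(3) g2(3) ori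
    by (simp add: t1_def t2_def t_def a1_def a2_def LP_def)
  have "std_rep m le mle G (spoly le t1 g1 t2 g2)" using CP crit g1(1) g2(1) unfolding CP_def by blast
  then obtain ps where ps: "\<forall>(p, gv)\<in>set ps. gv \<in> G \<and> ole le (lpp le (p * fst gv)) (lpp le fS) \<and>
        ole mle (vlpp m mle (vmult p (snd gv))) (vlpp m mle uS)" "fS = (\<Sum>(p, gv)\<leftarrow>ps. p * fst gv)"
    unfolding S std_rep_def by auto
  have F1: "le (LP fS) t \<and> LP fS \<noteq> t" if fS0: "fS \<noteq> 0"
  proof -
    have kb: "le x t" if x: "x \<in> Poly_Mapping.keys fS" for x
    proof -
      have "x \<in> Poly_Mapping.keys (Poly_Mapping.single t1 1 * fst g1) \<union> Poly_Mapping.keys (Poly_Mapping.single t2 k * fst g2)"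
        using x unfolding fS_def by (rule subsetD[OF keys_minus_sub])
      then show ?thesis
      proof
        assume "x \<in> Poly_Mapping.keys (Poly_Mapping.single t1 1 * fst g1)"
        from keys_le_smult[OF _ g1(3) this] show ?thesis using ar(1) unfolding a1_def by simp
      next
        assume "x \<in> Poly_Mapping.keys (Poly_Mapping.single t2 k * fst g2)"
        from keys_le_smult[OF k0 g2(3) this] show ?thesis using ar(2) unfolding a2_def by simp
      qed
    qed
    have "Poly_Mapping.lookup fS t = Poly_Mapping.lookup (Poly_Mapping.single t1 1 * fst g1) (t1 + a1)
        - Poly_Mapping.lookup (Poly_Mapping.single t2 k * fst g2) (t2 + a2)"
      unfolding fS_def lookup_minus ar(1,2) ..
    also have "\<dots> = 0" unfolding single_mult_lookup k_def using lc1 lc2 by simp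
    finally have "t \<notin> Poly_Mapping.keys fS" by (simp add: in_keys_iff)
    moreover have "LP fS \<in> Poly_Mapping.keys fS" using LP_char[OF fS0] by blast
    ultimately show ?thesis using kb by blast
  qed
  define \<beta>1 where "\<beta>1 = VP (snd g1)"
  define \<beta>2 where "\<beta>2 = VP (snd g2)"
  have b1m: "snd \<beta>1 < m" using VP_m[OF g1(4)] \<beta>1_def by simp
  have b2m: "snd \<beta>2 < m" using VP_m[OF g2(4)] \<beta>2_def by simp
  have ori': "mle (t2 + fst \<beta>2, snd \<beta>2) (t1 + fst \<beta>1, snd \<beta>1)"
  proof -
    have v1: "vlpp m mle (snd g1) = Some (fst \<beta>1, snd \<beta>1)" using VP_char[OF g1(4)] \<beta>1_def by simp
    have v2: "vlpp m mle (snd g2) = Some (fst \<beta>2, snd \<beta>2)" using VP_char[OF g2(4)] \<beta>2_def by simp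
    have "vlpp m mle (vmult (ppoly t1) (snd g1)) = Some (t1 + fst \<beta>1, snd \<beta>1)"
      unfolding ppoly_def by (rule vlpp_single_mult[OF _ v1]) simp
    moreover have "vlpp m mle (vmult (ppoly t2) (snd g2)) = Some (t2 + fst \<beta>2, snd \<beta>2)"
      unfolding ppoly_def by (rule vlpp_single_mult[OF _ v2]) simp
    ultimately show ?thesis using ori unfolding t2_def t1_def t_def a1_def a2_def by (simp add: ole_def)
  qed
  have F2: "mle (VP uS) (t1 + fst \<beta>1, snd \<beta>1)" if uS0: "vkeys m uS \<noteq> {}"
  proof -
    have "VP uS \<in> vkeys m uS" using VP_char[OF uS0] by blast
    then obtain a i where ai: "VP uS = (a, i)" "i < m" "a \<in> Poly_Mapping.keys (uS i)" unfolding vkeys_def by auto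
    have "a \<in> Poly_Mapping.keys (Poly_Mapping.single t1 1 * snd g1 i) \<union> Poly_Mapping.keys (Poly_Mapping.single t2 k * snd g2 i)"
      using ai(3) unfolding uS_def by (rule subsetD[OF keys_minus_sub])
    then show ?thesis
    proof
      assume "a \<in> Poly_Mapping.keys (Poly_Mapping.single t1 1 * snd g1 i)"
      then have "VP uS \<in> vkeys m (vmult (Poly_Mapping.single t1 1) (snd g1))"
        using ai unfolding vkeys_def vmult_def by simp
      from vkeys_le_smult[OF _ g1(4) this] show ?thesis unfolding \<beta>1_def by simp
    next
      assume "a \<in> Poly_Mapping.keys (Poly_Mapping.single t2 k * snd g2 i)"
      then have "VP uS \<in> vkeys m (vmult (Poly_Mapping.single t2 k) (snd g2))"
        using ai unfolding vkeys_def vmult_def by simp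
      from vkeys_le_smult[OF k0 g2(4) this] have "mle (VP uS) (t2 + fst \<beta>2, snd \<beta>2)" unfolding \<beta>2_def by simp
      then show ?thesis using mle_trans[OF _ _ _ _ ori'] ai(1,2) b1m b2m by simp
    qed
  qed
  define c2' where "c2' = c1 * k + c2"
  define E2 where "E2 = (if c2' = 0 then {#} else {#(c2', s2, g2)#})"
  define N where "N = sum_list (map (nf \<mu> c1) ps)"
  define es' where "es' = rest + E2 + N"
  have Ngood: "good G U T e \<and> \<not> lvl T e" if e: "e \<in># N" for e
  proof -
    obtain q h r where qhr: "(q, h) \<in> set ps" "fst h \<noteq> 0" "r \<in> Poly_Mapping.keys q"
        "e = (c1 * Poly_Mapping.lookup q r, \<mu> + r, h)"
      using nfs_mem[OF e[unfolded N_def]] by blast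
    have "case (q, h) of (p, gv) \<Rightarrow> gv \<in> G \<and> ole le (lpp le (p * fst gv)) (lpp le fS) \<and>
        ole mle (vlpp m mle (vmult p (snd gv))) (vlpp m mle uS)" using ps(1) qhr(1) by (rule bspec)
    then have hps: "h \<in> G" "ole le (lpp le (q * fst h)) (lpp le fS)" "ole mle (vlpp m mle (vmult q (snd h))) (vlpp m mle uS)"
      by simp_all
    have q0: "q \<noteq> 0" using qhr(3) by auto
    have hvk: "vkeys m (snd h) \<noteq> {}" using li_vk[of m F h] LI hps(1) qhr(2) unfolding LI_def by blast
    have lh: "lpp le (fst h) = Some (LP (fst h))" using LP_char[OF qhr(2)] by blast
    obtain t' where t': "lpp le (q * fst h) = Some t'" "\<forall>r\<in>Poly_Mapping.keys q. le (r + LP (fst h)) t'"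
      using lpp_mult[OF q0 lh] by blast
    obtain x where x: "lpp le fS = Some x" "le t' x"
      using hps(2) t'(1) unfolding ole_def by (cases "lpp le fS") auto
    have fS0: "fS \<noteq> 0" and xLP: "x = LP fS" using lpp_SomeD[OF x(1)] by auto
    have F: "le (LP fS) t" "LP fS \<noteq> t" using F1[OF fS0] by auto
    have rt: "le (r + LP (fst h)) t'" using t'(2) qhr(3) by blast
    have b1: "le (r + LP (fst h)) t" using ple_trans[OF rt ple_trans[OF x(2)]] F(1) xLP by simp
    have b2: "r + LP (fst h) \<noteq> t"
    proof
      assume "r + LP (fst h) = t"
      then have "le t (LP fS)" using ple_trans[OF rt x(2)] xLP by simp
      then show False using F ple_antisym by blast
    qed
    have bnd: "bnd e = \<mu> + (r + LP (fst h))" using qhr(4) unfolding bnd_def by (simp add: add.assoc)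
    have B1: "le (bnd e) T" using ple_add[OF b1, of \<mu>] ar(5) bnd by simp
    have B2: "bnd e \<noteq> T" using b2 ar(5) bnd by (metis add_left_cancel)
    define \<beta> where "\<beta> = VP (snd h)"
    have vh: "vlpp m mle (snd h) = Some (fst \<beta>, snd \<beta>)" using VP_char[OF hvk] \<beta>_def by simp
    have bm: "snd \<beta> < m" using VP_m[OF hvk] \<beta>_def by simp
    obtain t'' where t'': "vlpp m mle (vmult q (snd h)) = Some t''" "\<forall>r\<in>Poly_Mapping.keys q. mle (r + fst \<beta>, snd \<beta>) t''"
      using vlpp_mult[OF q0 vh] by blast
    obtain y where y: "vlpp m mle uS = Some y" "mle t'' y"
      using hps(3) t''(1) unfolding ole_def by (cases "vlpp m mle uS") auto
    have uS0: "vkeys m uS \<noteq> {}" and yVP: "y = VP uS" and ym: "snd y < m" using vlpp_SomeD[OF y(1)] by auto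
    have t''m: "snd t'' < m" using vlpp_SomeD(5)[OF t''(1)] .
    have rt'': "mle (r + fst \<beta>, snd \<beta>) t''" using t''(2) qhr(3) by blast
    have v0: "mle (r + fst \<beta>, snd \<beta>) y" using mle_trans[OF _ t''m ym rt'' y(2)] bm by simp
    have yb: "mle y (t1 + fst \<beta>1, snd \<beta>1)" using F2[OF uS0] yVP by simp
    have v1: "mle (r + fst \<beta>, snd \<beta>) (t1 + fst \<beta>1, snd \<beta>1)" using mle_trans[OF _ ym _ v0 yb] bm b1m by simp
    have v2: "mle (\<mu> + (r + fst \<beta>), snd \<beta>) (\<mu> + (t1 + fst \<beta>1), snd \<beta>1)" using mle_add[OF bm b1m v1] .
    have eq: "\<mu> + (t1 + fst \<beta>1) = s1 + fst \<beta>1" using ar(3) by (simp add: add.assoc[symmetric])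
    have u1: "mle (s1 + fst \<beta>1, snd \<beta>1) U" using g1(5) \<beta>1_def by simp
    have v3: "mle (\<mu> + r + fst \<beta>, snd \<beta>) U"
      using mle_trans[OF _ _ Um v2[unfolded eq] u1] bm b1m by (simp add: add.assoc)
    have c0: "c1 * Poly_Mapping.lookup q r \<noteq> 0" using g1(2) qhr(3) by (simp add: in_keys_iff)
    have "good G U T e" unfolding good_def good0_def using qhr(4) hps(1) c0 qhr(2) hvk v3 B1 \<beta>_def by simp
    moreover have "\<not> lvl T e" unfolding lvl_def using B2 .
    ultimately show ?thesis by blast
  qed

  have sum_eq: "f = sum_mset (image_mset tm es')"
  proof -
    have f: "f = tm (c1, s1, g1) + tm (c2, s2, g2) + sum_mset (image_mset tm rest)" using fsum by (simp add: add.assoc)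
    have "Poly_Mapping.single s1 c1 * fst g1 = (Poly_Mapping.single \<mu> c1 * Poly_Mapping.single t1 1) * fst g1"
      using ar(3) by (simp add: mult_single)
    also have "\<dots> = Poly_Mapping.single \<mu> c1 * (Poly_Mapping.single t1 1 * fst g1)" by (rule mult.assoc)
    also have "\<dots> = Poly_Mapping.single \<mu> c1 * (fS + Poly_Mapping.single t2 k * fst g2)" unfolding fS_def by simp
    also have "\<dots> = Poly_Mapping.single \<mu> c1 * fS + (Poly_Mapping.single \<mu> c1 * Poly_Mapping.single t2 k) * fst g2"
      by (simp add: distrib_left mult.assoc)
    also have "\<dots> = Poly_Mapping.single \<mu> c1 * fS + Poly_Mapping.single s2 (c1 * k) * fst g2"
      using ar(4) by (simp add: mult_single)
    finally have e1: "Poly_Mapping.single s1 c1 * fst g1 = Poly_Mapping.single \<mu> c1 * fS + Poly_Mapping.single s2 (c1 * k) * fst g2" .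
    have E2sum: "sum_mset (image_mset tm E2) = Poly_Mapping.single s2 c2' * fst g2" unfolding E2_def by auto
    have Nsum: "sum_mset (image_mset tm N) = Poly_Mapping.single \<mu> c1 * fS" using ps(2) unfolding N_def nfs_sum by simp
    have s2s: "Poly_Mapping.single s2 c2' * fst g2 = Poly_Mapping.single s2 (c1 * k) * fst g2 + Poly_Mapping.single s2 c2 * fst g2"
      unfolding c2'_def single_add distrib_right ..
    show ?thesis unfolding f es'_def image_mset_union sum_mset.union E2sum Nsum tm_simp e1 s2s
      by (simp add: add_ac)
  qed

  have goods: "\<forall>e\<in>#es'. good G U T e"
  proof
    fix e assume "e \<in># es'"
    then have "e \<in># rest \<or> e \<in># E2 \<or> e \<in># N" unfolding es'_def by auto
    then show "good G U T e"
    proof (elim disjE)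
      assume "e \<in># rest" then show ?thesis using grest by blast
    next
      assume "e \<in># N" then show ?thesis using Ngood by blast
    next
      assume eE: "e \<in># E2"
      then have "e = (c2', s2, g2)" "c2' \<noteq> 0" unfolding E2_def by (auto split: if_splits)
      then show ?thesis using ge2 unfolding good_def good0_def bnd_def by simp
    qed
  qed

  have sz: "size (filter_mset (lvl T) es') < size (filter_mset (lvl T) (add_mset (c1, s1, g1) (add_mset (c2, s2, g2) rest)))"
  proof -
    have N0: "filter_mset (lvl T) N = {#}" using Ngood by auto
    have E1: "size (filter_mset (lvl T) E2) \<le> 1" unfolding E2_def by auto
    have lv: "lvl T (c1, s1, g1)" "lvl T (c2, s2, g2)" unfolding lvl_def bnd_def using l1 l2 by auto
    have "size (filter_mset (lvl T) es') \<le> size (filter_mset (lvl T) rest) + 1"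
      unfolding es'_def filter_union_mset size_union N0 using E1 by simp
    also have "\<dots> < size (filter_mset (lvl T) (add_mset (c1, s1, g1) (add_mset (c2, s2, g2) rest)))"
      using lv by simp
    finally show ?thesis .
  qed

  show ?thesis using sum_eq goods sz Um unfolding rep_def by blast
qed

lemma step:
  assumes CP: "CP G" and LI: "LI F G" and r: "rep G U T f es" and L: "lpp le f = Some L" and LT: "L \<noteq> T"
    and ne: "filter_mset (lvl T) es \<noteq> {#}"
  shows "\<exists>es'. rep G U T f es' \<and> size (filter_mset (lvl T) es') < size (filter_mset (lvl T) es)"
proof -
  have f0: "f \<noteq> 0" and LL: "L = LP f" using lpp_SomeD[OF L] by auto
  have fT: "Poly_Mapping.lookup f T = 0"
  proof (rule ccontr)
    assume "Poly_Mapping.lookup f T \<noteq> 0"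
    then have "T \<in> Poly_Mapping.keys f" by (simp add: in_keys_iff)
    then have "le T L" using LP_char[OF f0] LL by blast
    moreover have "le L T" using rep_bound[OF r f0] LL by simp
    ultimately show False using LT ple_antisym by blast
  qed
  have s0: "sum_mset (image_mset (\<lambda>e. Poly_Mapping.lookup (tm e) T) (filter_mset (lvl T) es)) = 0"
    using rep_lookup_T[OF r] fT by simp
  obtain e1 where e1: "e1 \<in># filter_mset (lvl T) es" using ne by (meson multiset_nonemptyE)
  have lvgood: "Poly_Mapping.lookup (tm e) T \<noteq> 0" if "e \<in># filter_mset (lvl T) es" for e
  proof -
    obtain c s gv where ee: "e = (c, s, gv)" by (cases e) auto
    have "good G U T e" "lvl T e" using that r unfolding rep_def by auto
    then show ?thesis using good_tm(2)[of G U T c s gv] ee unfolding lvl_def bnd_def by simp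
  qed
  have ne2: "filter_mset (lvl T) es - {#e1#} \<noteq> {#}"
  proof
    assume "filter_mset (lvl T) es - {#e1#} = {#}"
    then have "filter_mset (lvl T) es = {#e1#}" using insert_DiffM[OF e1] by simp
    then have "sum_mset (image_mset (\<lambda>e. Poly_Mapping.lookup (tm e) T) (filter_mset (lvl T) es)) = Poly_Mapping.lookup (tm e1) T"
      by simp
    then show False using s0 lvgood[OF e1] by simp
  qed
  obtain e2 where e2: "e2 \<in># filter_mset (lvl T) es - {#e1#}" using ne2 by (meson multiset_nonemptyE)
  have e1es: "e1 \<in># es" and lv1: "lvl T e1" using e1 by auto
  have e2f: "e2 \<in># filter_mset (lvl T) es" using e2 by (rule in_diffD)
  then have lv2: "lvl T e2" by auto
  have "count (filter_mset (lvl T) es - {#e1#}) e2 \<le> count (es - {#e1#}) e2"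
    by (simp add: count_filter_mset)
  moreover have "0 < count (filter_mset (lvl T) es - {#e1#}) e2" using e2 by (simp only: count_greater_zero_iff)
  ultimately have "0 < count (es - {#e1#}) e2" by linarith
  then have e2es: "e2 \<in># es - {#e1#}" by (simp only: count_greater_zero_iff)
  define rest where "rest = es - {#e1#} - {#e2#}"
  have esd: "es = add_mset e1 (add_mset e2 rest)"
    unfolding rest_def using insert_DiffM[OF e1es] insert_DiffM[OF e2es] by simp
  obtain c1 s1 g1 where E1: "e1 = (c1, s1, g1)" by (cases e1) auto
  obtain c2 s2 g2 where E2: "e2 = (c2, s2, g2)" by (cases e2) auto
  have r': "rep G U T f (add_mset (c1, s1, g1) (add_mset (c2, s2, g2) rest))" using r esd E1 E2 by simp
  have r'': "rep G U T f (add_mset (c2, s2, g2) (add_mset (c1, s1, g1) rest))" using r' by (simp add: add_mset_commute)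
  have l1: "s1 + LP (fst g1) = T" using lv1 E1 unfolding lvl_def bnd_def by simp
  have l2: "s2 + LP (fst g2) = T" using lv2 E2 unfolding lvl_def bnd_def by simp
  have vk1: "vkeys m (snd g1) \<noteq> {}" and vk2: "vkeys m (snd g2) \<noteq> {}"
    using r' unfolding rep_def good_def good0_def by auto
  define t where "t = pp_lcm (LP (fst g1)) (LP (fst g2))"
  have t': "pp_lcm (LP (fst g2)) (LP (fst g1)) = t" unfolding t_def by (rule pp_lcm_comm)
  have v1: "vlpp m mle (snd g1) = Some (fst (VP (snd g1)), snd (VP (snd g1)))" using VP_char[OF vk1] by simp
  have v2: "vlpp m mle (snd g2) = Some (fst (VP (snd g2)), snd (VP (snd g2)))" using VP_char[OF vk2] by simp
  have X1: "vlpp m mle (vmult (ppoly (t - LP (fst g1))) (snd g1)) = Some (t - LP (fst g1) + fst (VP (snd g1)), snd (VP (snd g1)))"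
    unfolding ppoly_def by (rule vlpp_single_mult[OF _ v1]) simp
  have X2: "vlpp m mle (vmult (ppoly (t - LP (fst g2))) (snd g2)) = Some (t - LP (fst g2) + fst (VP (snd g2)), snd (VP (snd g2)))"
    unfolding ppoly_def by (rule vlpp_single_mult[OF _ v2]) simp
  have m1: "snd (VP (snd g1)) < m" using VP_m[OF vk1] .
  have m2: "snd (VP (snd g2)) < m" using VP_m[OF vk2] .
  have sz: "size (filter_mset (lvl T) (add_mset (c2, s2, g2) (add_mset (c1, s1, g1) rest))) = size (filter_mset (lvl T) es)"
    "size (filter_mset (lvl T) (add_mset (c1, s1, g1) (add_mset (c2, s2, g2) rest))) = size (filter_mset (lvl T) es)"
    using esd E1 E2 by (simp_all add: add_mset_commute)
  consider "mle (t - LP (fst g2) + fst (VP (snd g2)), snd (VP (snd g2))) (t - LP (fst g1) + fst (VP (snd g1)), snd (VP (snd g1)))"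
    | "mle (t - LP (fst g1) + fst (VP (snd g1)), snd (VP (snd g1))) (t - LP (fst g2) + fst (VP (snd g2)), snd (VP (snd g2)))"
    using mle_total[of "(t - LP (fst g2) + fst (VP (snd g2)), snd (VP (snd g2)))" "(t - LP (fst g1) + fst (VP (snd g1)), snd (VP (snd g1)))"] m1 m2 by auto
  then show ?thesis
  proof cases
    case 1
    then have "ole mle (vlpp m mle (vmult (ppoly (pp_lcm (LP (fst g1)) (LP (fst g2)) - LP (fst g2))) (snd g2)))
                      (vlpp m mle (vmult (ppoly (pp_lcm (LP (fst g1)) (LP (fst g2)) - LP (fst g1))) (snd g1)))"
      using X1 X2 unfolding t_def by (simp add: ole_def)
    from pair_step[OF CP LI r' l1 l2 this] show ?thesis using sz by simp
  next
    case 2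
    then have "ole mle (vlpp m mle (vmult (ppoly (pp_lcm (LP (fst g2)) (LP (fst g1)) - LP (fst g1))) (snd g1)))
                      (vlpp m mle (vmult (ppoly (pp_lcm (LP (fst g2)) (LP (fst g1)) - LP (fst g2))) (snd g2)))"
      using X1 X2 unfolding t' by (simp add: ole_def)
    from pair_step[OF CP LI r'' l2 l1 this] show ?thesis using sz by simp
  qed
qed

lemma wfR: "wf {(a, b). le a b \<and> a \<noteq> b}"
proof (rule wfI_min)
  fix x :: "'v pp" and Q assume "x \<in> Q"
  then obtain z where z: "z \<in> Q" "\<forall>y\<in>Q. le z y" using ple_min[of Q] by blast
  show "\<exists>z\<in>Q. \<forall>y. (y, z) \<in> {(a, b). le a b \<and> a \<noteq> b} \<longrightarrow> y \<notin> Q"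
    using z ple_antisym by blast
qed

lemma reach:
  assumes "CP G" "LI F G" "lpp le f = Some L"
  shows "rep G U T f es \<Longrightarrow> \<exists>es'. rep G U L f es'"
proof -
  have f0: "f \<noteq> 0" using assms(3) lpp_None by (metis option.distinct(1))
  have "\<forall>es. rep G U T f es \<longrightarrow> (\<exists>es'. rep G U L f es')"
  proof (induction T rule: wf_induct[OF wfR])
    case (1 T)
    show ?case
    proof (intro allI impI)
      fix es assume "rep G U T f es"
      then show "\<exists>es'. rep G U L f es'"
      proof (induction es rule: measure_induct_rule[of "\<lambda>es. size (filter_mset (lvl T) es)"])
        case (less es)
        show ?case
        proof (cases "L = T")
          case True then show ?thesis using less.prems by blast
        next
          case False
          show ?thesis
          proof (cases "filter_mset (lvl T) es = {#}")
            case True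
            obtain T' where "le T' T" "T' \<noteq> T" "rep G U T' f es"
              using empty_level[OF less.prems f0 True] by blast
            then show ?thesis using "1.IH" by blast
          next
            case nz: False
            obtain es' where "rep G U T f es'" "size (filter_mset (lvl T) es') < size (filter_mset (lvl T) es)"
              using step[OF assms(1,2) less.prems assms(3) False nz] by blast
            then show ?thesis using less.IH by blast
          qed
        qed
      qed
    qed
  qed
  then show "rep G U T f es \<Longrightarrow> \<exists>es'. rep G U L f es'" by blast
qed

lemma fin_lvl:
  assumes "rep G U L f es" "lpp le f = Some L"
  shows "\<exists>e\<in>#es. lvl L e"
proof -
  have f0: "f \<noteq> 0" using assms(2) lpp_None by (metis option.distinct(1))
  have "L = LP f" using assms(2) unfolding LP_def by simp
  then have "Poly_Mapping.lookup f L \<noteq> 0" using LP_char[OF f0] by (simp add: in_keys_iff)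
  then have "sum_mset (image_mset (\<lambda>e. Poly_Mapping.lookup (tm e) L) (filter_mset (lvl L) es)) \<noteq> 0"
    using rep_lookup_T[OF assms(1)] by simp
  then obtain e where "e \<in># filter_mset (lvl L) es" using sum_mset_nonzero by blast
  then show ?thesis by auto
qed

lemma VP_unit: "i < m \<Longrightarrow> VP (unit_vec i :: ('v, 'k::comm_ring_1) mvec) = (0, i)"
  unfolding VP_def using vlpp_eq[of "(0, i)" "unit_vec i :: ('v, 'k) mvec"] vkeys_unit[of i] mle_refl
  by (simp add: vkeys_unit)

lemma init:
  fixes F :: "('v, 'k::field) mvec"
  assumes "LI F G" "\<forall>i<m. (F i, unit_vec i) \<in> G" "labeled_in m F fu" "fst fu \<noteq> 0"
  shows "vkeys m (snd fu) \<noteq> {} \<and> (\<exists>T es. rep G (VP (snd fu)) T (fst fu) es)"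
proof -
  define u where "u = snd fu"
  define f where "f = fst fu"
  have fs: "f = (\<Sum>i<m. u i * F i)" using assms(3) unfolding labeled_in_def u_def f_def by auto
  have vk: "vkeys m u \<noteq> {}"
  proof
    assume "vkeys m u = {}"
    then have "\<forall>i<m. Poly_Mapping.keys (u i) = {}" unfolding vkeys_def by blast
    then have "\<forall>i<m. u i = 0" by simp
    then have "f = 0" using fs by simp
    then show False using assms(4) f_def by simp
  qed
  define A where "A = {i. i < m \<and> F i \<noteq> 0}"
  define M where "M = (\<lambda>i. image_mset (\<lambda>r. (Poly_Mapping.lookup (u i) r, r, (F i, unit_vec i :: ('v, 'k) mvec))) (mset_set (Poly_Mapping.keys (u i))))"
  define es where "es = (\<Sum>i\<in>A. M i)"
  have finA: "finite A" unfolding A_def by auto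
  have Mi: "sum_mset (image_mset tm (M i)) = u i * F i" for i
  proof -
    have "sum_mset (image_mset tm (M i)) = (\<Sum>r\<in>Poly_Mapping.keys (u i). tm (Poly_Mapping.lookup (u i) r, r, (F i, unit_vec i :: ('v, 'k) mvec)))"
      unfolding M_def multiset.map_comp sum_unfold_sum_mset by (simp only: o_def)
    also have "\<dots> = (\<Sum>r\<in>Poly_Mapping.keys (u i). Poly_Mapping.single r (Poly_Mapping.lookup (u i) r) * F i)"
      by simp
    also have "\<dots> = u i * F i"
      by (subst (2) poly_expand[of "u i"]) (simp add: sum_distrib_right)
    finally show ?thesis .
  qed
  have sumes: "f = sum_mset (image_mset tm es)"
  proof -
    have "sum_mset (image_mset tm es) = (\<Sum>i\<in>A. u i * F i)"
      unfolding es_def mset_sum_image[OF finA] Mi ..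
    also have "\<dots> = (\<Sum>i<m. u i * F i)"
      by (rule sum.mono_neutral_left) (auto simp: A_def)
    finally show ?thesis using fs by simp
  qed
  have U: "vlpp m mle u = Some (VP u)" "\<forall>s\<in>vkeys m u. mle s (VP u)" using VP_char[OF vk] by auto
  have gd: "\<forall>e\<in>#es. good0 G (VP u) e"
  proof
    fix e assume "e \<in># es"
    then have "e \<in># (\<Sum>i\<in>A. M i)" unfolding es_def .
    from mset_sum_mem[OF this] obtain i where i: "i \<in> A" "e \<in># M i" by blast
    then obtain r where r: "r \<in> Poly_Mapping.keys (u i)" "e = (Poly_Mapping.lookup (u i) r, r, (F i, unit_vec i))"
      unfolding M_def by auto
    have im: "i < m" "F i \<noteq> 0" using i(1) unfolding A_def by auto
    have "(r, i) \<in> vkeys m u" using r(1) im unfolding vkeys_def by auto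
    then have "mle (r, i) (VP u)" using U(2) by blast
    then show "good0 G (VP u) e"
      using r im assms(2) unfolding good0_def by (simp add: VP_unit vkeys_unit in_keys_iff)
  qed
  have f0: "f \<noteq> 0" using assms(4) f_def by simp
  show ?thesis using choose_T[OF VP_m[OF vk] f0 sumes gd] vk unfolding u_def f_def by blast
qed

end

theorem lemma5p2:
  fixes m :: nat
    and F :: "('v, 'k::field) mvec"
    and le :: "'v pp \<Rightarrow> 'v pp \<Rightarrow> bool"
    and mle :: "'v pp \<times> nat \<Rightarrow> 'v pp \<times> nat \<Rightarrow> bool"
    and G :: "('v, 'k) lpoly set"
  assumes "pp_term_order le"
    and "mod_term_order m mle"
    and "finite G"
    and "\<forall>gv\<in>G. labeled_in m F gv"
    and "\<forall>i<m. (F i, unit_vec i) \<in> G"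
    and "\<forall>gv\<in>G. \<forall>hw\<in>G. \<forall>tg th. critical_pair m le mle tg gv th hw \<longrightarrow>
            std_rep m le mle G (spoly le tg gv th hw)"
  shows "labeled_GB m le mle F G"
proof -
  interpret ctx m le mle using assms(1,2) by unfold_locales
  have CP: "CP G" using assms(6) unfolding CP_def by blast
  have LI: "LI F G" using assms(4) unfolding LI_def by blast
  show ?thesis unfolding labeled_GB_def
  proof (intro allI impI)
    fix fu :: "('v, 'k) lpoly" assume li: "labeled_in m F fu" and f0: "fst fu \<noteq> 0"
    obtain T es where vk: "vkeys m (snd fu) \<noteq> {}" and r: "rep G (VP (snd fu)) T (fst fu) es"
      using init[OF LI assms(5) li f0] by blast
    have Lf: "lpp le (fst fu) = Some (LP (fst fu))" using LP_char[OF f0] by blast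
    obtain es' where r': "rep G (VP (snd fu)) (LP (fst fu)) (fst fu) es'"
      using reach[OF CP LI Lf r] by blast
    obtain e where e: "e \<in># es'" "lvl (LP (fst fu)) e" using fin_lvl[OF r' Lf] by blast
    obtain c s gv where ee: "e = (c, s, gv)" by (cases e) auto
    have g: "gv \<in> G" "fst gv \<noteq> 0" "vkeys m (snd gv) \<noteq> {}"
      "mle (s + fst (VP (snd gv)), snd (VP (snd gv))) (VP (snd fu))"
      using r' e(1) ee unfolding rep_def good_def good0_def by auto
    have lv: "s + LP (fst gv) = LP (fst fu)" using e(2) ee unfolding lvl_def bnd_def by simp
    have d: "the (lpp le (fst fu)) - the (lpp le (fst gv)) = s"
      using lv unfolding LP_def by (metis add_diff_cancel_right')
    have pd: "pp_dvd (the (lpp le (fst gv))) (the (lpp le (fst fu)))"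
      using lv unfolding LP_def pp_dvd_def by (metis add.commute)
    have vg: "vlpp m mle (snd gv) = Some (fst (VP (snd gv)), snd (VP (snd gv)))" using VP_char[OF g(3)] by simp
    have "vlpp m mle (vmult (ppoly s) (snd gv)) = Some (s + fst (VP (snd gv)), snd (VP (snd gv)))"
      unfolding ppoly_def by (rule vlpp_single_mult[OF _ vg]) simp
    moreover have "vlpp m mle (snd fu) = Some (VP (snd fu))" using VP_char[OF vk] by blast
    ultimately have "ole mle (vlpp m mle (vmult (ppoly (the (lpp le (fst fu)) - the (lpp le (fst gv)))) (snd gv)))
         (vlpp m mle (snd fu))" using g(4) d by (simp add: ole_def)
    then show "\<exists>gv\<in>G. fst gv \<noteq> 0 \<and> pp_dvd (the (lpp le (fst gv))) (the (lpp le (fst fu))) \<and>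
           ole mle (vlpp m mle (vmult (ppoly (the (lpp le (fst fu)) - the (lpp le (fst gv)))) (snd gv)))
                   (vlpp m mle (snd fu))" using g pd by blast
  qed
qed

end
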